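(* Let $q$ be a power of an odd prime $p\neq 3$ with $3\mid q-1$, let $\tau\in\mathbb{F}_q\setminus\{0,1/4,-1/50\}$, and let $\mathfrak{C}/\mathbb{F}_q$ be the genus $2$ curve $y^2=x^6+x^3+\tau$ with function field $F$ and $N=\#\mathbb{P}^1_F$ rational places. Then for all integers $t,\ell$ with $1\le t<\ell\le\lfloor N/3\rfloor-1$ there exists a $q$-ary linear locally repairable code with locality $2$ and parameters $$[\,n=3\ell,\ k=2t+1,\ d\ge n-3t-1\,]_q$$ whose Singleton-optimal defect is at most $1$.
   Context: $\mathbb{P}^1_F$ is the set of rational (degree one) places of the function field $F=\mathbb{F}_q(x,y)$. A code $\mathcal{C}\subseteq\mathbb{F}_q^n$ has locality $r$ if for every coordinate $i$ there is a set $I_i\subseteq\{1,\dots,n\}\setminus\{i\}$ with $|I_i|=r$ such that for $a\ne a'$ in $\mathbb{F}_q$ the restrictions to $I_i$ of $\{c\in\mathcal{C}:c_i=a\}$ and $\{c\in\mathcal{C}:c_i=a'\}$ are disjoint. For an $[n,k,d]_q$ code with locality $r$ the Singleton-optimal defect is $\Delta=n-k-\lceil k/r\rceil+2-d\ge0$; optimal means $\Delta=0$, almost optimal means $\Delta=1$. *)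

theory Defs
  imports Complex_Main "HOL-Library.Function_Algebras" "HOL-Computational_Algebra.Primes"
begin

text \<open>Vectors of \<open>F_q^n\<close> are represented as functions \<open>nat \<Rightarrow> 'a\<close> that vanish
  outside the coordinate set \<open>{..<n}\<close>.\<close>

definition coord_scale :: "'a::field \<Rightarrow> (nat \<Rightarrow> 'a) \<Rightarrow> (nat \<Rightarrow> 'a)" where
  "coord_scale c v = (\<lambda>i. c * v i)"

definition ambient :: "nat \<Rightarrow> (nat \<Rightarrow> 'a::zero) set" where
  "ambient n = {v. \<forall>i. n \<le> i \<longrightarrow> v i = 0}"

definition linear_code :: "nat \<Rightarrow> (nat \<Rightarrow> 'a::field) set \<Rightarrow> bool" where
  "linear_code n C \<longleftrightarrow> C \<subseteq> ambient n \<and> module.subspace coord_scale C"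

definition code_dim :: "(nat \<Rightarrow> 'a::field) set \<Rightarrow> nat" where
  "code_dim C = vector_space.dim coord_scale C"

definition hamming_weight :: "nat \<Rightarrow> (nat \<Rightarrow> 'a::zero) \<Rightarrow> nat" where
  "hamming_weight n v = card {i. i < n \<and> v i \<noteq> 0}"

definition min_dist :: "nat \<Rightarrow> (nat \<Rightarrow> 'a::field) set \<Rightarrow> nat" where
  "min_dist n C = Min {hamming_weight n c | c. c \<in> C \<and> c \<noteq> 0}"

definition restr :: "nat set \<Rightarrow> (nat \<Rightarrow> 'a::zero) \<Rightarrow> (nat \<Rightarrow> 'a)" where
  "restr I c = (\<lambda>j. if j \<in> I then c j else 0)"

definition has_locality :: "nat \<Rightarrow> (nat \<Rightarrow> 'a::field) set \<Rightarrow> nat \<Rightarrow> bool" where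
  "has_locality n C r \<longleftrightarrow>
     (\<forall>i<n. \<exists>I. I \<subseteq> {..<n} - {i} \<and> card I = r \<and>
        (\<forall>a a'. a \<noteq> a' \<longrightarrow>
           restr I ` {c\<in>C. c i = a} \<inter> restr I ` {c\<in>C. c i = a'} = {}))"

definition singleton_defect :: "nat \<Rightarrow> nat \<Rightarrow> nat \<Rightarrow> nat \<Rightarrow> int" where
  "singleton_defect n k d r = int n - int k - \<lceil>rat_of_nat k / rat_of_nat r\<rceil> + 2 - int d"

text \<open>Number of rational places of the function field \<open>F_q(x,y)\<close>, \<open>y^2 = x^6+x^3+\<tau>\<close>
  (q odd, \<open>\<tau> \<noteq> 0, 1/4\<close>, so the sextic is squarefree and the curve has genus 2):
  over each \<open>a \<in> F_q\<close> the rational places correspond to the solutions \<open>b\<close> of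
  \<open>b^2 = a^6+a^3+\<tau>\<close> (one place if the right side is 0, two if a nonzero square, none
  otherwise), and since the degree is even with square leading coefficient 1,
  there are exactly two rational places at infinity.\<close>
definition num_rat_places :: "'a::{field,finite} \<Rightarrow> nat" where
  "num_rat_places \<tau> = card {(a,b). b^2 = a^6 + a^3 + \<tau>} + 2"

end

theory Submission imports Defs "HOL-Computational_Algebra.Polynomial" "HOL-Number_Theory.Residues"
begin

hide_const (open) UnivPoly.coeff UnivPoly.monom Coset.order module.smult

interpretation cs: vector_space coord_scale
  by unfold_locales (auto simp: coord_scale_def algebra_simps)

lemma fun_sum_apply: "(sum f K) x = sum (\<lambda>k. f k x) K"
  by (induction K rule: infinite_finite_induct) auto

lemma ff_fermat:
  fixes x :: "'a::{field,finite}"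
  assumes "x \<noteq> 0"
  shows "x ^ (card (UNIV :: 'a set) - 1) = 1"
proof -
  have "(\<Prod>y\<in>UNIV-{0}. x * y) = x ^ card (UNIV - {0::'a}) * \<Prod>(UNIV-{0::'a})"
    by (simp add: prod.distrib)
  also have "card (UNIV - {0::'a}) = card (UNIV :: 'a set) - 1"
    by (simp add: card_Diff_subset)
  also have "(\<Prod>y\<in>UNIV-{0}. x * y) = (\<Prod>y\<in>UNIV-{0}. y)"
    by (rule prod.reindex_bij_witness[of _ "\<lambda>y. y / x" "\<lambda>y. x * y"]) (use assms in auto)
  finally have "\<Prod>(UNIV-{0::'a}) * 1 = \<Prod>(UNIV-{0::'a}) * x ^ (card (UNIV :: 'a set) - 1)"
    by (simp add: mult_ac)
  moreover have "\<Prod>(UNIV-{0::'a}) \<noteq> 0" by (simp)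
  ultimately show ?thesis by (metis mult_left_cancel)
qed


lemma two_nz:
  assumes "prime p" "odd p" "card (UNIV :: 'a::{field,finite} set) = p ^ m"
  shows "(2::'a) \<noteq> 0"
proof
  assume h: "(2::'a) = 0"
  have "of_nat 2 = (0::'a)" using h by simp
  hence "CHAR('a) dvd 2" using of_nat_eq_0_iff_char_dvd by blast
  moreover have "CHAR('a) \<noteq> 1" using CHAR_not_1 by simp
  moreover have "CHAR('a) \<noteq> 0" using finite_imp_CHAR_pos[where 'a='a] by simp
  ultimately have "CHAR('a) = 2"
  proof -
    have "CHAR('a) \<le> 2" using \<open>CHAR('a) dvd 2\<close> by (simp add: dvd_imp_le)
    thus ?thesis using \<open>CHAR('a) \<noteq> 1\<close> \<open>CHAR('a) \<noteq> 0\<close> by linarith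
  qed
  hence "2 dvd p ^ m" using CHAR_dvd_CARD assms(3) by metis
  hence "2 dvd p" by (meson prime_dvd_power two_is_prime_nat)
  thus False using assms(2) by simp
qed

lemma omega_ex:
  assumes "3 dvd (card (UNIV :: 'a::{field,finite} set) - 1)"
  shows "\<exists>\<omega>::'a. \<omega> \<noteq> 1 \<and> \<omega>^3 = 1"
proof (rule ccontr)
  assume nex: "\<not> ?thesis"
  define q where "q = card (UNIV :: 'a set)"
  have q2: "q \<ge> 2"
  proof -
    have "{0::'a,1} \<subseteq> UNIV" by simp
    hence "card {0::'a,1} \<le> q" unfolding q_def by (intro card_mono) auto
    thus ?thesis by simp
  qed
  obtain k where k: "q - 1 = 3 * k" using assms unfolding q_def by blast
  have k1: "k \<ge> 1" using k q2 by simp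
  define P :: "'a poly" where "P = (\<Sum>i<k. monom 1 (3*i))"
  have polyP: "poly P x = (\<Sum>i<k. (x^3)^i)" for x
    by (simp add: P_def poly_sum poly_monom power_mult)
  have "coeff P 0 = 1" using k1
    by (simp add: P_def coeff_sum coeff_monom)
  hence Pnz: "P \<noteq> 0" by auto
  have degP: "degree P \<le> 3*k - 3"
    unfolding P_def by (rule degree_sum_le) (auto simp: degree_monom_le intro: order.trans[OF degree_monom_le])
  have sub: "UNIV - {0,1} \<subseteq> {x. poly P x = 0}"
  proof
    fix x :: 'a assume "x \<in> UNIV - {0,1}"
    hence x0: "x \<noteq> 0" and x1: "x \<noteq> 1" by auto
    have "x^3 \<noteq> 1" using nex x1 by blast
    have "(x^3)^k = 1" using ff_fermat[OF x0] k unfolding q_def by (simp add: power_mult)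
    hence "(x^3 - 1) * (\<Sum>i<k. (x^3)^i) = 0"
      by (metis diff_self power_diff_1_eq mult.commute)
    with \<open>x^3 \<noteq> 1\<close> show "x \<in> {x. poly P x = 0}" by (simp add: polyP)
  qed
  have cq: "card (UNIV - {0::'a,1}) = q - 2" unfolding q_def by (simp add: card_Diff_subset)
  have "q - 2 \<le> card {x. poly P x = 0}" using sub Pnz cq
    by (metis card_mono poly_roots_finite)
  also have "\<dots> \<le> 3*k - 3" using card_poly_roots_bound[OF Pnz] degP by linarith
  finally show False using k k1 by linarith
qed

lemma alg_helper: "((1::'a::field) + 2 * s) * (- x * b) ^ 3 + (s^2 - \<tau>) * b ^ 3 = b ^ 3 * (s^2 - \<tau> - x ^ 3 * (2 * s + 1))"
  by (simp add: power_mult_distrib algebra_simps)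

locale lrc =
  fixes \<tau> \<omega> :: "'a::{field,finite}" and l t :: nat and g :: "nat \<Rightarrow> 'a \<times> 'a"
  assumes two: "(2::'a) \<noteq> 0" and tau: "\<tau> \<noteq> 1/4"
    and om1: "\<omega> \<noteq> 1" and om3: "\<omega>^3 = 1"
    and gT: "\<And>j. j < l \<Longrightarrow> fst (g j) \<noteq> 0 \<and> (\<exists>a. a^3 = fst (g j)) \<and>
                (snd (g j))^2 = (fst (g j))^2 + fst (g j) + \<tau>"
    and ginj: "inj_on g {..<l}"
    and t1: "1 \<le> t" and tl: "t < l"
begin

definition uu :: "nat \<Rightarrow> 'a" where "uu j = fst (g j)"
definition bb :: "nat \<Rightarrow> 'a" where "bb j = snd (g j)"
definition aa :: "nat \<Rightarrow> 'a" where "aa j = (SOME a. a^3 = uu j)"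
definition ss :: "nat \<Rightarrow> 'a" where "ss j = bb j + uu j"
definition xx :: "nat \<Rightarrow> 'a" where "xx i = \<omega>^(i mod 3) * aa (i div 3)"
definition cw :: "'a poly \<Rightarrow> 'a poly \<Rightarrow> nat \<Rightarrow> 'a" where
  "cw A B i = (if i < 3*l then poly A (ss (i div 3)) + xx i * poly B (ss (i div 3)) else 0)"
definition RR :: "'a poly \<Rightarrow> 'a poly \<Rightarrow> 'a poly" where
  "RR A B = [:1,2:] * A^3 + [:-\<tau>,0,1:] * B^3"

lemma aa_cube: "j < l \<Longrightarrow> aa j ^ 3 = uu j"
  unfolding aa_def uu_def using gT by (metis (mono_tags, lifting) someI_ex)

lemma uu_nz: "j < l \<Longrightarrow> uu j \<noteq> 0"
  unfolding uu_def using gT by blast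

lemma aa_nz: "j < l \<Longrightarrow> aa j \<noteq> 0"
  using aa_cube uu_nz by fastforce

lemma xx_cube: "i < 3*l \<Longrightarrow> xx i ^ 3 = uu (i div 3)"
proof -
  assume "i < 3*l"
  hence "i div 3 < l" by linarith
  have e: "(\<omega>^(i mod 3))^3 = (\<omega>^3)^(i mod 3)" by (metis power_mult mult.commute)
  have "xx i ^ 3 = (\<omega>^3)^(i mod 3) * aa (i div 3) ^ 3"
    unfolding xx_def power_mult_distrib e ..
  thus ?thesis using om3 aa_cube[OF \<open>i div 3 < l\<close>] by simp
qed

lemma om_nz: "\<omega> \<noteq> 0" using om3 by auto

lemma om_pow_inj: "i < 3 \<Longrightarrow> i' < 3 \<Longrightarrow> \<omega>^i = \<omega>^i' \<Longrightarrow> i = i'"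
proof -
  assume a: "i < 3" "i' < 3" "\<omega>^i = \<omega>^i'"
  have w2: "\<omega>^2 \<noteq> 1"
  proof
    assume "\<omega>^2 = 1"
    hence "\<omega>^3 = \<omega>" by (simp add: power_Suc numeral_3_eq_3 numeral_2_eq_2)
    thus False using om3 om1 by simp
  qed
  have w21: "\<omega>^2 \<noteq> \<omega>"
  proof
    assume "\<omega>^2 = \<omega>"
    hence "\<omega> * \<omega> = \<omega> * 1" by (simp add: power2_eq_square)
    thus False using om_nz om1 by simp
  qed
  have "i = 0 \<or> i = 1 \<or> i = 2" "i' = 0 \<or> i' = 1 \<or> i' = 2" using a by linarith+
  with a(3) show "i = i'" using w2 w21 om1 by (auto dest: sym)
qed

lemma xx_inj: "i < 3*l \<Longrightarrow> i' < 3*l \<Longrightarrow> i div 3 = i' div 3 \<Longrightarrow> xx i = xx i' \<Longrightarrow> i = i'"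
proof -
  assume a: "i < 3*l" "i' < 3*l" "i div 3 = i' div 3" "xx i = xx i'"
  hence "i div 3 < l" by linarith
  hence "aa (i div 3) \<noteq> 0" by (rule aa_nz)
  hence "\<omega>^(i mod 3) = \<omega>^(i' mod 3)" using a unfolding xx_def by simp
  hence "i mod 3 = i' mod 3" by (intro om_pow_inj) auto
  thus ?thesis using a(3) by (metis div_mod_decomp)
qed

lemma ss_rel: "j < l \<Longrightarrow> ss j ^ 2 - \<tau> = uu j * (2 * ss j + 1)"
proof -
  assume "j < l"
  hence "bb j ^ 2 = uu j ^ 2 + uu j + \<tau>" using gT unfolding bb_def uu_def by blast
  thus ?thesis unfolding ss_def by (simp add: power2_eq_square algebra_simps)
qed

lemma ss_inj: "inj_on ss {..<l}"
proof (rule inj_onI)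
  fix j j' assume j: "j \<in> {..<l}" and j': "j' \<in> {..<l}" and e: "ss j = ss j'"
  have "2 * ss j + 1 \<noteq> 0"
  proof
    assume h: "2 * ss j + 1 = 0"
    hence "2 * ss j = - 1" by (simp add: eq_neg_iff_add_eq_0)
    hence "(2 * ss j)^2 = 1" by simp
    hence "4 * ss j ^ 2 = 1" by (simp add: power_mult_distrib)
    moreover have "(4::'a) \<noteq> 0" using two by (metis mult_2_right mult_eq_0_iff numeral_Bit0 numeral_times_numeral semiring_norm(12))
    ultimately have "ss j ^ 2 = 1/4" by (simp add: field_simps)
    moreover have "ss j ^ 2 - \<tau> = 0" using ss_rel[of j] j h by simp
    ultimately show False using tau by (metis right_minus_eq)
  qed
  hence "uu j = uu j'" using ss_rel[of j] ss_rel[of j'] j j' e by simp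
  moreover have "bb j = bb j'" using e calculation unfolding ss_def by simp
  ultimately have "g j = g j'" unfolding uu_def bb_def by (simp add: prod_eq_iff)
  thus "j = j'" using ginj j j' by (simp add: inj_on_def)
qed


lemma deg1: "degree [:1,2::'a:] = 1" using two by simp
lemma deg2: "degree [:-\<tau>,0,1::'a:] = 2" by simp

lemma RR_nz: assumes "A \<noteq> 0 \<or> B \<noteq> 0" shows "RR A B \<noteq> 0"
proof
  assume h: "RR A B = 0"
  have n1: "[:1,2::'a:] \<noteq> 0" and n2: "[:-\<tau>,0,1::'a:] \<noteq> 0" by auto
  show False
  proof (cases "A = 0")
    case True
    then have "B \<noteq> 0" using assms by simp
    have "[:-\<tau>,0,1:] * B^3 = 0" using h True unfolding RR_def by simp
    then show False using \<open>B \<noteq> 0\<close> n2 by (simp only: mult_eq_0_iff power_eq_0_iff) simp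
  next
    case A: False
    show False
    proof (cases "B = 0")
      case True
      have "[:1,2:] * A^3 = 0" using h True unfolding RR_def by simp
      then show False using A n1 by (simp only: mult_eq_0_iff power_eq_0_iff) simp
    next
      case B: False
      have "[:1,2:] * A^3 = - ([:-\<tau>,0,1:] * B^3)" using h unfolding RR_def
        by (simp only: eq_neg_iff_add_eq_0)
      hence "degree ([:1,2:] * A^3) = degree ([:-\<tau>,0,1:] * B^3)" by (metis degree_minus)
      moreover have "degree ([:1,2:] * A^3) = 1 + 3 * degree A"
        using deg1 by (simp only: degree_mult_eq[OF n1 power_not_zero[OF A]] degree_power_eq[OF A])
      moreover have "degree ([:-\<tau>,0,1:] * B^3) = 2 + 3 * degree B"
        using deg2 by (simp only: degree_mult_eq[OF n2 power_not_zero[OF B]] degree_power_eq[OF B])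
      ultimately show False by presburger
    qed
  qed
qed

lemma RR_deg: assumes "degree A \<le> t" "degree B \<le> t - 1" shows "degree (RR A B) \<le> 3*t+1"
proof -
  have "degree ([:1,2:] * A^3) \<le> 1 + 3 * degree A"
    by (rule order.trans[OF degree_mult_le]) (use deg1 degree_power_le[of A 3] in simp)
  moreover have "degree ([:-\<tau>,0,1:] * B^3) \<le> 2 + 3 * degree B"
    by (rule order.trans[OF degree_mult_le]) (use deg2 degree_power_le[of B 3] in simp)
  ultimately show ?thesis unfolding RR_def using assms t1
    by (intro order.trans[OF degree_add_le_max]) linarith
qed

lemma cw_root: assumes "i < 3*l" "cw A B i = 0" shows "poly (RR A B) (ss (i div 3)) = 0"
proof -
  define s where "s = ss (i div 3)"
  define x where "x = xx i"
  have jl: "i div 3 < l" using assms by linarith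
  have x3: "x^3 = uu (i div 3)" using xx_cube assms unfolding x_def by simp
  have rel: "s^2 - \<tau> = uu (i div 3) * (2*s+1)" using ss_rel[OF jl] unfolding s_def .
  have a: "poly A s = - x * poly B s" using assms unfolding cw_def s_def x_def
    by (simp add: eq_neg_iff_add_eq_0)
  have "poly (RR A B) s = poly [:1,2:] s * poly A s ^ 3 + poly [:-\<tau>,0,1:] s * poly B s ^ 3"
    unfolding RR_def by (simp only: poly_add poly_mult poly_power)
  also have "\<dots> = (1 + 2*s) * (- x * poly B s)^3 + (s^2 - \<tau>) * poly B s ^ 3"
    by (simp add: a power2_eq_square)
  also have "\<dots> = poly B s ^ 3 * ((s^2 - \<tau>) - x^3 * (2*s+1))"
    by (rule alg_helper)
  also have "\<dots> = 0" using rel x3 by simp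
  finally show ?thesis unfolding s_def .
qed

lemma cw_two_zeros:
  assumes "i < 3*l" "i' < 3*l" "i div 3 = i' div 3" "i \<noteq> i'" "cw A B i = 0" "cw A B i' = 0"
  shows "poly A (ss (i div 3)) = 0 \<and> poly B (ss (i div 3)) = 0"
proof -
  have "xx i \<noteq> xx i'" using xx_inj[OF assms(1,2,3)] assms(4) by blast
  have e1: "poly A (ss (i div 3)) + xx i * poly B (ss (i div 3)) = 0" using assms(1,5) unfolding cw_def by simp
  have e2: "poly A (ss (i div 3)) + xx i' * poly B (ss (i div 3)) = 0" using assms(2,3,6) unfolding cw_def by simp
  have "(xx i - xx i') * poly B (ss (i div 3)) = (poly A (ss (i div 3)) + xx i * poly B (ss (i div 3))) - (poly A (ss (i div 3)) + xx i' * poly B (ss (i div 3)))"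
    by (simp add: algebra_simps)
  also have "\<dots> = 0" using e1 e2 by simp
  finally have "(xx i - xx i') * poly B (ss (i div 3)) = 0" .
  moreover note \<open>xx i \<noteq> xx i'\<close>
  ultimately have "poly B (ss (i div 3)) = 0" by simp
  thus ?thesis using assms unfolding cw_def by simp
qed

lemma group_count:
  assumes j: "j < l" and nz: "A \<noteq> 0 \<or> B \<noteq> 0"
  shows "card {i. i < 3*l \<and> i div 3 = j \<and> cw A B i = 0} \<le> order (ss j) (RR A B)"
    (is "card ?G \<le> _")
proof -
  have Rnz: "RR A B \<noteq> 0" using RR_nz nz .
  have sub: "?G \<subseteq> {3*j, 3*j+1, 3*j+2}"
  proof
    fix i assume "i \<in> ?G"
    hence "i div 3 = j" by simp
    moreover have "i = 3 * (i div 3) + i mod 3" by simp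
    moreover have "i mod 3 < 3" by simp
    ultimately have "i = 3*j \<or> i = 3*j+1 \<or> i = 3*j+2" by linarith
    thus "i \<in> {3*j, 3*j+1, 3*j+2}" by blast
  qed
  have fin: "finite ?G" using sub finite_subset by blast
  show ?thesis
  proof (cases "poly A (ss j) = 0 \<and> poly B (ss j) = 0")
    case True
    hence d1: "[:-ss j,1:] dvd A" and d2: "[:-ss j,1:] dvd B" by (simp_all add: poly_eq_0_iff_dvd)
    have d3: "[:-ss j,1:]^3 dvd A^3" using d1 by (rule dvd_power_same)
    have d4: "[:-ss j,1:]^3 dvd B^3" using d2 by (rule dvd_power_same)
    have "[:-ss j,1:]^3 dvd RR A B" unfolding RR_def
      by (rule dvd_add; rule dvd_mult) (fact d3, fact d4)
    hence "3 \<le> order (ss j) (RR A B)" using Rnz order_divides by blast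
    moreover have "card ?G \<le> 3"
    proof -
      have "card {3*j, 3*j+1, 3*j+2} = 3" by simp
      thus ?thesis using card_mono[OF _ sub] by simp
    qed
    ultimately show ?thesis by linarith
  next
    case False
    have "card ?G \<le> Suc 0"
    proof (subst card_le_Suc0_iff_eq[OF fin], intro ballI)
      fix i i' assume i: "i \<in> ?G" and i': "i' \<in> ?G"
      show "i = i'"
      proof (rule ccontr)
        assume "i \<noteq> i'"
        have "poly A (ss (i div 3)) = 0 \<and> poly B (ss (i div 3)) = 0"
          by (rule cw_two_zeros) (use i i' \<open>i \<noteq> i'\<close> in auto)
        thus False using False i by simp
      qed
    qed
    moreover have "?G \<noteq> {} \<Longrightarrow> order (ss j) (RR A B) \<ge> 1"
    proof -
      assume "?G \<noteq> {}"
      then obtain i where i: "i \<in> ?G" by blast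
      hence "poly (RR A B) (ss j) = 0" using cw_root[of i A B] by simp
      hence "order (ss j) (RR A B) \<noteq> 0" using Rnz order_root by blast
      thus ?thesis by linarith
    qed
    ultimately show ?thesis by (cases "?G = {}") (simp only: card.empty le0, linarith)
  qed
qed


lemma zero_count:
  assumes dA: "degree A \<le> t" and dB: "degree B \<le> t - 1" and nz: "A \<noteq> 0 \<or> B \<noteq> 0"
  shows "card {i. i < 3*l \<and> cw A B i = 0} \<le> 3*t+1"
proof -
  define R where "R = RR A B"
  have Rnz: "R \<noteq> 0" unfolding R_def using RR_nz nz .
  define G where "G j = {i. i < 3*l \<and> i div 3 = j \<and> cw A B i = 0}" for j
  define Roots where "Roots = {s. poly R s = 0}"
  have finR: "finite Roots" unfolding Roots_def using poly_roots_finite[OF Rnz] .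
  have "{i. i < 3*l \<and> cw A B i = 0} \<subseteq> (\<Union>j\<in>{..<l}. G j)"
  proof
    fix i assume "i \<in> {i. i < 3*l \<and> cw A B i = 0}"
    hence "i < 3*l" "cw A B i = 0" by auto
    moreover have "i div 3 < l" using \<open>i < 3*l\<close> by linarith
    ultimately show "i \<in> (\<Union>j\<in>{..<l}. G j)" unfolding G_def by auto
  qed
  hence "card {i. i < 3*l \<and> cw A B i = 0} \<le> card (\<Union>j\<in>{..<l}. G j)"
    by (intro card_mono) (auto simp: G_def)
  also have "\<dots> \<le> (\<Sum>j<l. card (G j))" by (rule card_UN_le) simp
  also have "\<dots> \<le> (\<Sum>j<l. order (ss j) R)"
    by (intro sum_mono) (unfold G_def R_def, rule group_count, use nz in auto)
  also have "\<dots> = (\<Sum>s\<in>ss ` {..<l}. order s R)"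
    by (simp add: sum.reindex[OF ss_inj])
  also have "\<dots> = (\<Sum>s\<in>ss ` {..<l} \<inter> Roots. order s R)"
  proof (rule sum.mono_neutral_right)
    show "\<forall>s\<in>ss ` {..<l} - ss ` {..<l} \<inter> Roots. order s R = 0"
      unfolding Roots_def using order_root by blast
  qed auto
  also have "\<dots> \<le> (\<Sum>s\<in>Roots. order s R)"
    by (rule sum_mono2[OF finR]) auto
  also have "\<dots> \<le> degree R" unfolding Roots_def by (rule sum_order_le_degree[OF Rnz])
  also have "\<dots> \<le> 3*t+1" unfolding R_def by (rule RR_deg[OF dA dB])
  finally show ?thesis .
qed

lemma cw_zero_imp:
  assumes dA: "degree A \<le> t" and dB: "degree B \<le> t - 1" and z: "cw A B = 0"
  shows "A = 0 \<and> B = 0"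
proof (rule ccontr)
  assume "\<not> (A = 0 \<and> B = 0)"
  hence "card {i. i < 3*l \<and> cw A B i = 0} \<le> 3*t+1" using zero_count dA dB by blast
  moreover have "{i. i < 3*l \<and> cw A B i = 0} = {..<3*l}" using z by auto
  ultimately show False using tl by simp
qed

lemma card_split: "card {i. i < n \<and> P i} + card {i. i < n \<and> \<not> P i} = n"
proof -
  have "{..<n} = {i. i < n \<and> P i} \<union> {i. i < n \<and> \<not> P i}" by auto
  hence "card {..<n} = card ({i. i < n \<and> P i} \<union> {i. i < n \<and> \<not> P i})" by simp
  also have "\<dots> = card {i. i < n \<and> P i} + card {i. i < n \<and> \<not> P i}"
    by (rule card_Un_disjoint) auto
  finally show ?thesis by simp
qed

lemma weight_bound:
  assumes dA: "degree A \<le> t" and dB: "degree B \<le> t - 1" and nz: "cw A B \<noteq> 0"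
  shows "hamming_weight (3*l) (cw A B) + 3*t + 1 \<ge> 3*l"
proof -
  have "A \<noteq> 0 \<or> B \<noteq> 0"
  proof (rule ccontr)
    assume "\<not> (A \<noteq> 0 \<or> B \<noteq> 0)"
    hence "cw A B = 0" by (auto simp: cw_def)
    thus False using nz by simp
  qed
  hence "card {i. i < 3*l \<and> cw A B i = 0} \<le> 3*t+1" using zero_count dA dB by blast
  moreover have "card {i. i < 3*l \<and> cw A B i \<noteq> 0} + card {i. i < 3*l \<and> \<not> cw A B i \<noteq> 0} = 3*l"
    by (rule card_split)
  ultimately show ?thesis unfolding hamming_weight_def by simp
qed

definition Ak :: "nat \<Rightarrow> 'a poly" where "Ak k = (if k \<le> t then monom 1 k else 0)"
definition Bk :: "nat \<Rightarrow> 'a poly" where "Bk k = (if k \<le> t then 0 else monom 1 (k - Suc t))"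
definition ee :: "nat \<Rightarrow> nat \<Rightarrow> 'a" where "ee k = cw (Ak k) (Bk k)"
definition CC :: "(nat \<Rightarrow> 'a) set" where "CC = cs.span (ee ` {..2*t})"

lemma degAk: "degree (Ak k) \<le> t"
  by (simp add: Ak_def degree_monom_eq)
lemma degBk: "k \<le> 2*t \<Longrightarrow> degree (Bk k) \<le> t - 1"
  by (simp add: Bk_def degree_monom_eq) arith

lemma cw_lin: "coord_scale c (cw A B) + cw A' B' = cw (smult c A + A') (smult c B + B')"
  by (rule ext) (simp add: coord_scale_def cw_def algebra_simps)

lemma cw_00: "cw 0 0 = 0"
  by (rule ext) (simp add: cw_def)

lemma cw_diff: "cw A B - cw A' B' = cw (A - A') (B - B')"
  by (rule ext) (simp add: cw_def algebra_simps)

lemma span_sub: "v \<in> CC \<Longrightarrow> \<exists>A B. degree A \<le> t \<and> degree B \<le> t - 1 \<and> v = cw A B"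
  unfolding CC_def
proof (induction rule: cs.span_induct_alt)
  case base
  then show ?case using cw_00 by (metis degree_0 zero_le)
next
  case (step c x y)
  then obtain k where k: "k \<le> 2*t" "x = ee k" by auto
  from step obtain A B where AB: "degree A \<le> t" "degree B \<le> t - 1" "y = cw A B" by blast
  have "coord_scale c x + y = cw (smult c (Ak k) + A) (smult c (Bk k) + B)"
    unfolding k AB ee_def by (rule cw_lin)
  moreover have "degree (smult c (Ak k) + A) \<le> t"
    using degAk[of k] AB by (intro order.trans[OF degree_add_le_max]) (simp add: order.trans[OF degree_smult_le])
  moreover have "degree (smult c (Bk k) + B) \<le> t - 1"
    using degBk[OF k(1)] AB by (intro order.trans[OF degree_add_le_max]) (simp add: order.trans[OF degree_smult_le])
  ultimately show ?case by blast
qed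

lemma lin_comb: "finite K \<Longrightarrow> (\<Sum>k\<in>K. coord_scale (w k) (ee k)) = cw (\<Sum>k\<in>K. smult (w k) (Ak k)) (\<Sum>k\<in>K. smult (w k) (Bk k))"
proof (induction K rule: finite_induct)
  case empty
  then show ?case by (simp add: cw_00)
next
  case (insert k K)
  then show ?case by (simp add: ee_def cw_lin)
qed


lemma coeffA: "k \<le> t \<Longrightarrow> coeff (Ak k') k = (if k' = k then 1 else 0)"
  by (auto simp: Ak_def coeff_monom)

lemma coeffB: "t < k \<Longrightarrow> coeff (Bk k') (k - Suc t) = (if k' = k then 1 else 0)"
  by (auto simp: Bk_def coeff_monom)

lemma ee_inj: "inj_on ee {..2*t}"
proof (rule inj_onI)
  fix k k' assume k: "k \<in> {..2*t}" and k': "k' \<in> {..2*t}" and e: "ee k = ee k'"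
  have "cw (Ak k - Ak k') (Bk k - Bk k') = 0"
    using e unfolding ee_def by (simp flip: cw_diff)
  moreover have "degree (Ak k - Ak k') \<le> t"
    using degAk by (intro order.trans[OF degree_diff_le_max]) auto
  moreover have "degree (Bk k - Bk k') \<le> t - 1"
    using degBk k k' by (intro order.trans[OF degree_diff_le_max]) auto
  ultimately have "Ak k - Ak k' = 0 \<and> Bk k - Bk k' = 0" using cw_zero_imp by blast
  hence AA: "Ak k = Ak k'" and BB: "Bk k = Bk k'" by auto
  show "k = k'"
  proof (cases "k \<le> t")
    case True
    have "coeff (Ak k) k = coeff (Ak k') k" using AA by simp
    thus ?thesis using coeffA[OF True, of k] coeffA[OF True, of k'] by (auto split: if_splits)
  next
    case False
    hence F: "t < k" by simp
    have "coeff (Bk k) (k - Suc t) = coeff (Bk k') (k - Suc t)" using BB by simp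
    thus ?thesis using coeffB[OF F, of k] coeffB[OF F, of k'] by (auto split: if_splits)
  qed
qed

lemma indep_aux: "\<forall>c. (\<Sum>v\<in>ee ` {..2*t}. coord_scale (c v) v) = 0 \<longrightarrow> (\<forall>v\<in>ee ` {..2*t}. c v = 0)"
proof (intro allI impI ballI)
  fix c v
  assume h: "(\<Sum>v\<in>ee ` {..2*t}. coord_scale (c v) v) = 0" and v: "v \<in> ee ` {..2*t}"
  define w where "w k = c (ee k)" for k
  have "(\<Sum>k\<in>{..2*t}. coord_scale (w k) (ee k)) = 0"
    using h unfolding w_def by (simp add: sum.reindex[OF ee_inj])
  hence z: "cw (\<Sum>k\<in>{..2*t}. smult (w k) (Ak k)) (\<Sum>k\<in>{..2*t}. smult (w k) (Bk k)) = 0"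
    by (simp add: lin_comb)
  have dA: "degree (\<Sum>k\<in>{..2*t}. smult (w k) (Ak k)) \<le> t"
    by (intro degree_sum_le) (auto intro: order.trans[OF degree_smult_le] degAk)
  have dB: "degree (\<Sum>k\<in>{..2*t}. smult (w k) (Bk k)) \<le> t - 1"
    by (intro degree_sum_le) (use degBk in \<open>auto intro: order.trans[OF degree_smult_le]\<close>)
  from cw_zero_imp[OF dA dB z] have
    zA: "(\<Sum>k\<in>{..2*t}. smult (w k) (Ak k)) = 0" and zB: "(\<Sum>k\<in>{..2*t}. smult (w k) (Bk k)) = 0"
    by auto
  from v obtain k where k: "k \<le> 2*t" "v = ee k" by auto
  have "w k = 0"
  proof (cases "k \<le> t")
    case True
    have "0 = coeff (\<Sum>k\<in>{..2*t}. smult (w k) (Ak k)) k" using zA by simp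
    also have "\<dots> = (\<Sum>k'\<in>{..2*t}. w k' * (if k' = k then 1 else 0))"
      by (simp add: coeff_sum coeffA[OF True])
    also have "\<dots> = w k" using k by (simp add: sum.delta if_distrib[of "\<lambda>x. _ * x"] cong: if_cong)
    finally show ?thesis by simp
  next
    case False
    hence F: "t < k" by simp
    have "0 = coeff (\<Sum>k\<in>{..2*t}. smult (w k) (Bk k)) (k - Suc t)" using zB by simp
    also have "\<dots> = (\<Sum>k'\<in>{..2*t}. w k' * (if k' = k then 1 else 0))"
      by (simp add: coeff_sum coeffB[OF F])
    also have "\<dots> = w k" using k by (simp add: sum.delta if_distrib[of "\<lambda>x. _ * x"] cong: if_cong)
    finally show ?thesis by simp
  qed
  thus "c v = 0" unfolding w_def k by simp
qed

lemma indep: "cs.independent (ee ` {..2*t})"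
  using indep_aux by (auto simp: cs.dependent_finite)

lemma dimCC: "code_dim CC = 2*t+1"
proof -
  have "code_dim CC = card (ee ` {..2*t})"
    unfolding code_dim_def CC_def by (rule cs.dim_span_eq_card_independent[OF indep])
  also have "\<dots> = 2*t+1" using card_image[OF ee_inj] by simp
  finally show ?thesis .
qed

lemma local_rep:
  assumes v: "v \<in> CC" and i: "i < 3*l"
    and z: "\<And>k. k \<in> {3*(i div 3), 3*(i div 3)+1, 3*(i div 3)+2} - {i} \<Longrightarrow> v k = 0"
  shows "v i = 0"
proof -
  obtain A B where AB: "v = cw A B" using span_sub[OF v] by blast
  define j where "j = i div 3"
  define i1 where "i1 = 3*j + (i+1) mod 3"
  define i2 where "i2 = 3*j + (i+2) mod 3"
  have ii: "i = 3*j + i mod 3" unfolding j_def by simp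
  have m: "i mod 3 < 3" by simp
  have jl: "j < l" using i unfolding j_def by linarith
  have i1p: "i1 \<noteq> i" "i1 div 3 = j" "i1 < 3*l" unfolding i1_def using ii m jl by (simp_all, presburger+)
  have i2p: "i2 \<noteq> i" "i2 div 3 = j" "i2 < 3*l" "i2 \<noteq> i1" unfolding i2_def i1_def using ii m jl by (simp_all, presburger+)
  have "i1 \<in> {3*j, 3*j+1, 3*j+2}" unfolding i1_def by (simp, presburger)
  hence z1: "cw A B i1 = 0" using z i1p unfolding j_def AB by auto
  have "i2 \<in> {3*j, 3*j+1, 3*j+2}" unfolding i2_def by (simp, presburger)
  hence z2: "cw A B i2 = 0" using z i2p unfolding j_def AB by auto
  have "poly A (ss (i1 div 3)) = 0 \<and> poly B (ss (i1 div 3)) = 0"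
    by (rule cw_two_zeros[OF i1p(3) i2p(3)]) (use i1p i2p z1 z2 in auto)
  thus ?thesis unfolding AB cw_def using i i1p j_def by simp
qed

end

lemma card_sq_le: "card {b::'a::{field,finite}. b^2 = c} \<le> 2"
proof -
  have "{b::'a. b^2 = c} = {b. poly [:-c,0,1:] b = 0}" by (auto simp: power2_eq_square)
  also have "card \<dots> \<le> degree [:-c,0,1::'a:]" by (rule card_poly_roots_bound) auto
  finally show ?thesis by simp
qed

lemma card_cube_le: "card {a::'a::{field,finite}. a^3 = c} \<le> 3"
proof -
  have "{a::'a. a^3 = c} = {a. poly [:-c,0,0,1:] a = 0}"
    by (auto simp: power3_eq_cube algebra_simps)
  also have "card \<dots> \<le> degree [:-c,0,0,1::'a:]" by (rule card_poly_roots_bound) auto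
  finally show ?thesis by simp
qed

lemma count_T:
  fixes \<tau> :: "'a::{field,finite}"
  shows "card {(a,b). b^2 = a^6 + a^3 + \<tau>} \<le>
         3 * card {(u,b). u \<noteq> 0 \<and> (\<exists>a. a^3 = u) \<and> b^2 = u^2 + u + (\<tau>::'a)} + 2"
proof -
  define T where "T = {(u,b). u \<noteq> 0 \<and> (\<exists>a. a^3 = u) \<and> b^2 = u^2 + u + (\<tau>::'a)}"
  define S0 where "S0 = (\<lambda>b. (0::'a,b)) ` {b. b^2 = \<tau>}"
  define S1 where "S1 = (\<Union>p\<in>T. (\<lambda>a. (a, snd p)) ` {a::'a. a^3 = fst p})"
  have "{(a,b). b^2 = a^6 + a^3 + \<tau>} \<subseteq> S0 \<union> S1"
  proof
    fix p assume "p \<in> {(a::'a,b). b^2 = a^6 + a^3 + \<tau>}"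
    then obtain a b where p: "p = (a,b)" "b^2 = a^6 + a^3 + \<tau>" by auto
    show "p \<in> S0 \<union> S1"
    proof (cases "a = 0")
      case True
      then show ?thesis using p unfolding S0_def by auto
    next
      case False
      have a6: "a^6 = (a^3)^2" using power_mult[of a 3 2] by simp
      have "b^2 = (a^3)^2 + a^3 + \<tau>" using p(2) unfolding a6 .
      hence "(a^3, b) \<in> T" unfolding T_def using False by auto
      moreover have "p \<in> (\<lambda>x. (x, snd (a^3,b))) ` {x. x^3 = fst (a^3, b)}" using p by auto
      ultimately show ?thesis unfolding S1_def by blast
    qed
  qed
  hence "card {(a,b). b^2 = a^6 + a^3 + \<tau>} \<le> card (S0 \<union> S1)" by (intro card_mono) auto
  also have "\<dots> \<le> card S0 + card S1" by (rule card_Un_le)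
  also have "card S0 \<le> 2" unfolding S0_def
    by (rule order.trans[OF card_image_le card_sq_le]) simp
  also have "card S1 \<le> (\<Sum>p\<in>T. card ((\<lambda>a. (a, snd p)) ` {a::'a. a^3 = fst p}))"
    unfolding S1_def by (rule card_UN_le) simp
  also have "\<dots> \<le> (\<Sum>p\<in>T. 3)"
    by (intro sum_mono order.trans[OF card_image_le card_cube_le]) simp
  finally show ?thesis unfolding T_def by simp
qed

lemma ceil_half: "\<lceil>rat_of_nat (2*t+1) / rat_of_nat 2\<rceil> = int t + 1"
  by (rule ceiling_unique) (simp_all add: field_simps)

theorem mainTheorem10:
  fixes \<tau> :: "'a::{field,finite}"
    and p m :: nat and t l :: nat
  assumes "prime p" and "odd p" and "p \<noteq> 3" and "m \<ge> 1"
    and "card (UNIV :: 'a set) = p ^ m"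
    and "3 dvd (card (UNIV :: 'a set) - 1)"
    and "\<tau> \<noteq> 0" and "\<tau> \<noteq> 1/4" and "\<tau> \<noteq> -1/50"
    and "1 \<le> t" and "t < l" and "l + 1 \<le> num_rat_places \<tau> div 3"
  shows "\<exists>C :: (nat \<Rightarrow> 'a) set.
           linear_code (3*l) C \<and> code_dim C = 2*t+1 \<and> has_locality (3*l) C 2 \<and>
           int (min_dist (3*l) C) \<ge> int (3*l) - 3 * int t - 1 \<and>
           singleton_defect (3*l) (2*t+1) (min_dist (3*l) C) 2 \<le> 1"
proof -
  have two: "(2::'a) \<noteq> 0" using two_nz assms(1,2,5) by blast
  obtain \<omega> :: 'a where om: "\<omega> \<noteq> 1" "\<omega>^3 = 1" using omega_ex assms(6) by blast
  define T where "T = {(u,b). u \<noteq> 0 \<and> (\<exists>a. a^3 = u) \<and> b^2 = u^2 + u + (\<tau>::'a)}"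
  have "num_rat_places \<tau> \<le> 3 * card T + 4"
    unfolding num_rat_places_def T_def using count_T[of \<tau>] by simp
  hence "num_rat_places \<tau> div 3 \<le> card T + 1" by linarith
  hence lT: "l \<le> card T" using assms(12) by linarith
  obtain T' where T': "T' \<subseteq> T" "card T' = l" "finite T'"
    using obtain_subset_with_card_n[OF lT] by blast
  obtain g where g: "bij_betw g {0..<l} T'" using ex_bij_betw_nat_finite[OF T'(3)] T'(2) by blast
  have ginj: "inj_on g {..<l}" using g by (simp add: bij_betw_def lessThan_atLeast0)
  have gT: "g j \<in> T" if "j < l" for j using g T'(1) that by (auto simp: bij_betw_def)
  interpret L: lrc \<tau> \<omega> l t g
  proof
    show "fst (g j) \<noteq> 0 \<and> (\<exists>a. a^3 = fst (g j)) \<and> (snd (g j))^2 = (fst (g j))^2 + fst (g j) + \<tau>"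
      if "j < l" for j using gT[OF that] unfolding T_def by auto
  qed (use two om assms ginj in auto)
  have sub: "\<exists>A B. degree A \<le> t \<and> degree B \<le> t - 1 \<and> v = L.cw A B" if "v \<in> L.CC" for v
    using L.span_sub that by blast
  have lin: "linear_code (3*l) L.CC"
    unfolding linear_code_def
  proof
    show "L.CC \<subseteq> ambient (3*l)"
    proof
      fix v assume "v \<in> L.CC"
      then obtain A B where "v = L.cw A B" using sub by blast
      thus "v \<in> ambient (3*l)" unfolding ambient_def L.cw_def by auto
    qed
    show "module.subspace coord_scale L.CC" unfolding L.CC_def by (rule cs.subspace_span)
  qed
  have loc: "has_locality (3*l) L.CC 2"
    unfolding has_locality_def
  proof (intro allI impI)
    fix i assume i: "i < 3*l"
    define j where "j = i div 3"
    define I where "I = {3*j, 3*j+1, 3*j+2} - {i}"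
    have jl: "j < l" using i unfolding j_def by linarith
    have iin: "i \<in> {3*j, 3*j+1, 3*j+2}" unfolding j_def by (simp, presburger)
    have "I \<subseteq> {..<3*l} - {i}" unfolding I_def using jl by auto
    moreover have "card I = 2"
    proof -
      have "card {3*j, 3*j+1, 3*j+2} = 3" by simp
      thus ?thesis unfolding I_def using iin by (simp add: card_Diff_singleton)
    qed
    moreover have "\<forall>a a'. a \<noteq> a' \<longrightarrow>
           restr I ` {c\<in>L.CC. c i = a} \<inter> restr I ` {c\<in>L.CC. c i = a'} = {}"
    proof (intro allI impI)
      fix a a' :: 'a assume ne: "a \<noteq> a'"
      show "restr I ` {c\<in>L.CC. c i = a} \<inter> restr I ` {c\<in>L.CC. c i = a'} = {}"
      proof (rule ccontr)
        assume "restr I ` {c\<in>L.CC. c i = a} \<inter> restr I ` {c\<in>L.CC. c i = a'} \<noteq> {}"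
        then obtain c c' where c: "c \<in> L.CC" "c i = a" and c': "c' \<in> L.CC" "c' i = a'"
          and e: "restr I c = restr I c'" by blast
        have vC: "c - c' \<in> L.CC" using cs.span_diff[OF c(1)[unfolded L.CC_def] c'(1)[unfolded L.CC_def]] unfolding L.CC_def .
        have "(c - c') k = 0" if "k \<in> {3*(i div 3), 3*(i div 3)+1, 3*(i div 3)+2} - {i}" for k
        proof -
          have "k \<in> I" using that unfolding I_def j_def .
          hence "c k = c' k" using fun_cong[OF e, of k] unfolding restr_def by simp
          thus ?thesis by simp
        qed
        hence "(c - c') i = 0" using L.local_rep[OF vC i] by blast
        thus False using c c' ne by simp
      qed
    qed
    ultimately show "\<exists>I. I \<subseteq> {..<3*l} - {i} \<and> card I = 2 \<and> (\<forall>a a'. a \<noteq> a' \<longrightarrow>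
           restr I ` {c\<in>L.CC. c i = a} \<inter> restr I ` {c\<in>L.CC. c i = a'} = {})" by blast
  qed
  define W where "W = {hamming_weight (3*l) c | c. c \<in> L.CC \<and> c \<noteq> 0}"
  have finW: "finite W"
  proof (rule finite_subset)
    show "W \<subseteq> {..3*l}"
    proof
      fix w assume "w \<in> W"
      then obtain c :: "nat \<Rightarrow> 'a" where "w = hamming_weight (3*l) c" unfolding W_def by blast
      moreover have "card {i. i < 3*l \<and> c i \<noteq> 0} \<le> card {..<3*l}" by (rule card_mono) auto
      ultimately show "w \<in> {..3*l}" unfolding hamming_weight_def by simp
    qed
  qed simp
  have e0: "L.ee 0 \<in> L.CC" unfolding L.CC_def by (rule cs.span_base) simp
  have e0nz: "L.ee 0 \<noteq> 0"
  proof
    assume "L.ee 0 = 0"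
    hence "L.ee 0 0 = 0" by simp
    moreover have "0 < 3*l" using assms(11) by simp
    ultimately show False unfolding L.ee_def L.cw_def L.Ak_def L.Bk_def by simp
  qed
  have Wne: "W \<noteq> {}" unfolding W_def using e0 e0nz by blast
  have "min_dist (3*l) L.CC \<in> W" unfolding min_dist_def W_def[symmetric] using Min_in[OF finW Wne] .
  then obtain c where c: "c \<in> L.CC" "c \<noteq> 0" and md: "min_dist (3*l) L.CC = hamming_weight (3*l) c"
    unfolding W_def by blast
  obtain A B where AB: "degree A \<le> t" "degree B \<le> t - 1" "c = L.cw A B" using sub[OF c(1)] by blast
  have "hamming_weight (3*l) c + 3*t + 1 \<ge> 3*l" using L.weight_bound AB c(2) by blast
  hence dist: "int (min_dist (3*l) L.CC) \<ge> int (3*l) - 3 * int t - 1" unfolding md by linarith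
  have "singleton_defect (3*l) (2*t+1) (min_dist (3*l) L.CC) 2 \<le> 1"
    unfolding singleton_defect_def ceil_half using dist by linarith
  thus ?thesis using lin L.dimCC loc dist by blast
qed

end
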